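(* Let $A$ be a real Baer von Neumann regular poring, let $\mathfrak{p}\in\mathrm{Spec}\,A$ and let $B=\prod_{\mathfrak{q}\in\mathrm{Spec}\,A}K_\mathfrak{q}$ be an epof of $A$. Let $e\in B$ be the idempotent with $e(\mathfrak{q})=1$ for $\mathfrak{q}\neq\mathfrak{p}$ and $e(\mathfrak{p})=0$. Then $\mathfrak{p}$ is an isolated point of $\mathrm{Spec}\,A$ if and only if there is an ideal $I$ of $B$ with $I\subset eB$ such that $B/I$ is an essential extension of $A$ (via $A\to B\to B/I$).
   Context: All rings are commutative and unitary. A poring is a ring $A$ with a partial ordering $A^+$ (closed under addition and multiplication, containing all squares). A ring is real if $\sum a_i^2=0$ implies all $a_i=0$; von Neumann regular if every $a$ has $b$ with $a=a^2b$; Baer if the annihilator of every subset is generated by an idempotent. An epof of $A$ is the poring $B=\prod_{\mathfrak{q}\in\mathrm{Spec}\,A}K_\mathfrak{q}$ with $B^+=B^2$, each $K_\mathfrak{q}$ a real closed field algebraic over $\mathrm{qf}(A/\mathfrak{q})$ with $A^+/\mathfrak{q}\subset K_\mathfrak{q}^2$, $A$ embedded diagonally; $b(\mathfrak{q})$ denotes the $\mathfrak{q}$-component of $b\in B$. $A\to D$ is an essential extension if it is injective and every nonzero ideal of $D$ meets the image of $A$ nontrivially. A point is isolated if its singleton is clopen. *)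

theory Defs
  imports "HOL-Algebra.QuotRing"
begin

(* Poring: commutative ring A with a partial ordering given by the positive cone P *)
definition poring :: "('a, 'm) ring_scheme \<Rightarrow> 'a set \<Rightarrow> bool" where
  "poring A P \<longleftrightarrow> cring A \<and> P \<subseteq> carrier A
     \<and> (\<forall>x\<in>P. \<forall>y\<in>P. x \<oplus>\<^bsub>A\<^esub> y \<in> P \<and> x \<otimes>\<^bsub>A\<^esub> y \<in> P)
     \<and> (\<forall>x\<in>carrier A. x \<otimes>\<^bsub>A\<^esub> x \<in> P)
     \<and> (\<forall>x\<in>P. \<ominus>\<^bsub>A\<^esub> x \<in> P \<longrightarrow> x = \<zero>\<^bsub>A\<^esub>)"

definition real_ring :: "('a, 'm) ring_scheme \<Rightarrow> bool" where
  "real_ring A \<longleftrightarrow> (\<forall>(n::nat) (a::nat \<Rightarrow> 'a). (\<forall>i<n. a i \<in> carrier A) \<longrightarrow>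
      finsum A (\<lambda>i. a i \<otimes>\<^bsub>A\<^esub> a i) {..<n} = \<zero>\<^bsub>A\<^esub> \<longrightarrow> (\<forall>i<n. a i = \<zero>\<^bsub>A\<^esub>))"

definition von_neumann_regular :: "('a, 'm) ring_scheme \<Rightarrow> bool" where
  "von_neumann_regular A \<longleftrightarrow>
     (\<forall>a\<in>carrier A. \<exists>b\<in>carrier A. a = a \<otimes>\<^bsub>A\<^esub> a \<otimes>\<^bsub>A\<^esub> b)"

definition annihilator :: "('a, 'm) ring_scheme \<Rightarrow> 'a set \<Rightarrow> 'a set" where
  "annihilator A S = {x \<in> carrier A. \<forall>s\<in>S. x \<otimes>\<^bsub>A\<^esub> s = \<zero>\<^bsub>A\<^esub>}"

definition baer_ring :: "('a, 'm) ring_scheme \<Rightarrow> bool" where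
  "baer_ring A \<longleftrightarrow> (\<forall>S \<subseteq> carrier A. \<exists>f\<in>carrier A. f \<otimes>\<^bsub>A\<^esub> f = f \<and>
      annihilator A S = {f \<otimes>\<^bsub>A\<^esub> x | x. x \<in> carrier A})"

definition Spec :: "('a, 'm) ring_scheme \<Rightarrow> 'a set set" where
  "Spec A = {q. primeideal q A}"

definition zariski_closed :: "('a, 'm) ring_scheme \<Rightarrow> 'a set set \<Rightarrow> bool" where
  "zariski_closed A C \<longleftrightarrow> (\<exists>S \<subseteq> carrier A. C = {q \<in> Spec A. S \<subseteq> q})"

definition zariski_open :: "('a, 'm) ring_scheme \<Rightarrow> 'a set set \<Rightarrow> bool" where
  "zariski_open A U \<longleftrightarrow> U \<subseteq> Spec A \<and> zariski_closed A (Spec A - U)"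

definition isolated_point :: "('a, 'm) ring_scheme \<Rightarrow> 'a set \<Rightarrow> bool" where
  "isolated_point A p \<longleftrightarrow> p \<in> Spec A \<and> zariski_open A {p} \<and> zariski_closed A {p}"

definition real_closed_field :: "('b, 'm) ring_scheme \<Rightarrow> bool" where
  "real_closed_field F \<longleftrightarrow> field F
     \<and> (\<forall>(n::nat) (x::nat \<Rightarrow> 'b). (\<forall>i<n. x i \<in> carrier F) \<longrightarrow>
          finsum F (\<lambda>i. x i \<otimes>\<^bsub>F\<^esub> x i) {..<n} \<noteq> \<ominus>\<^bsub>F\<^esub> \<one>\<^bsub>F\<^esub>)
     \<and> (\<forall>x\<in>carrier F. \<exists>y\<in>carrier F. x = y \<otimes>\<^bsub>F\<^esub> y \<or> \<ominus>\<^bsub>F\<^esub> x = y \<otimes>\<^bsub>F\<^esub> y)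
     \<and> (\<forall>(n::nat) (c::nat \<Rightarrow> 'b). odd n \<longrightarrow> (\<forall>i\<le>n. c i \<in> carrier F) \<longrightarrow> c n \<noteq> \<zero>\<^bsub>F\<^esub> \<longrightarrow>
          (\<exists>x\<in>carrier F. finsum F (\<lambda>i. c i \<otimes>\<^bsub>F\<^esub> x [^]\<^bsub>F\<^esub> i) {..n} = \<zero>\<^bsub>F\<^esub>))"

definition algebraic_over :: "('b, 'm) ring_scheme \<Rightarrow> 'b set \<Rightarrow> 'b \<Rightarrow> bool" where
  "algebraic_over F k x \<longleftrightarrow> (\<exists>(n::nat) (c::nat \<Rightarrow> 'b). (\<forall>i\<le>n. c i \<in> k) \<and> c n \<noteq> \<zero>\<^bsub>F\<^esub>
       \<and> finsum F (\<lambda>i. c i \<otimes>\<^bsub>F\<^esub> x [^]\<^bsub>F\<^esub> i) {..n} = \<zero>\<^bsub>F\<^esub>)"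

(* Image of qf(A/q) in K, given the ring hom phi : A -> K with kernel q *)
definition qf_image :: "('a, 'm) ring_scheme \<Rightarrow> 'b ring \<Rightarrow> ('a \<Rightarrow> 'b) \<Rightarrow> 'a set \<Rightarrow> 'b set" where
  "qf_image A K phi q = {phi a \<otimes>\<^bsub>K\<^esub> inv\<^bsub>K\<^esub> (phi s) | a s. a \<in> carrier A \<and> s \<in> carrier A - q}"

definition prod_ring :: "'i set \<Rightarrow> ('i \<Rightarrow> 'b ring) \<Rightarrow> ('i \<Rightarrow> 'b) ring" where
  "prod_ring I K = \<lparr>carrier = (PiE I (\<lambda>q. carrier (K q))),
      mult = (\<lambda>x y. restrict (\<lambda>q. x q \<otimes>\<^bsub>K q\<^esub> y q) I),
      one = (restrict (\<lambda>q. \<one>\<^bsub>K q\<^esub>) I),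
      zero = (restrict (\<lambda>q. \<zero>\<^bsub>K q\<^esub>) I),
      add = (\<lambda>x y. restrict (\<lambda>q. x q \<oplus>\<^bsub>K q\<^esub> y q) I)\<rparr>"

definition diag_map :: "('a, 'm) ring_scheme \<Rightarrow> ('a set \<Rightarrow> 'a \<Rightarrow> 'b) \<Rightarrow> 'a \<Rightarrow> ('a set \<Rightarrow> 'b)" where
  "diag_map A phi a = (\<lambda>q\<in>Spec A. phi q a)"

(* B = prod K_q (with B^+ = B^2) is an epof of the poring (A,P); phi q : A -> K q is the
   canonical map A -> A/q -> qf(A/q) -> K q *)
definition epof :: "('a, 'm) ring_scheme \<Rightarrow> 'a set \<Rightarrow> ('a set \<Rightarrow> 'b ring) \<Rightarrow> ('a set \<Rightarrow> 'a \<Rightarrow> 'b) \<Rightarrow> bool" where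
  "epof A P K phi \<longleftrightarrow> (\<forall>q\<in>Spec A.
       real_closed_field (K q)
     \<and> phi q \<in> ring_hom A (K q)
     \<and> {a \<in> carrier A. phi q a = \<zero>\<^bsub>K q\<^esub>} = q
     \<and> (\<forall>x\<in>carrier (K q). algebraic_over (K q) (qf_image A (K q) (phi q) q) x)
     \<and> (\<forall>a\<in>P. \<exists>y\<in>carrier (K q). phi q a = y \<otimes>\<^bsub>K q\<^esub> y))"

definition essential_extension :: "('a, 'm) ring_scheme \<Rightarrow> ('d, 'n) ring_scheme \<Rightarrow> ('a \<Rightarrow> 'd) \<Rightarrow> bool" where
  "essential_extension A D f \<longleftrightarrow> f \<in> ring_hom A D \<and> inj_on f (carrier A)
     \<and> (\<forall>J. ideal J D \<and> J \<noteq> {\<zero>\<^bsub>D\<^esub>} \<longrightarrow> (\<exists>a\<in>carrier A. f a \<in> J \<and> f a \<noteq> \<zero>\<^bsub>D\<^esub>))"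

end

theory Submission
  imports Defs "HOL-Algebra.Ring_Divisibility"
begin
lemma prod_ring_simps:
  "carrier (prod_ring S K) = PiE S (\<lambda>q. carrier (K q))"
  "x \<otimes>\<^bsub>prod_ring S K\<^esub> y = restrict (\<lambda>q. x q \<otimes>\<^bsub>K q\<^esub> y q) S"
  "x \<oplus>\<^bsub>prod_ring S K\<^esub> y = restrict (\<lambda>q. x q \<oplus>\<^bsub>K q\<^esub> y q) S"
  "\<one>\<^bsub>prod_ring S K\<^esub> = restrict (\<lambda>q. \<one>\<^bsub>K q\<^esub>) S"
  "\<zero>\<^bsub>prod_ring S K\<^esub> = restrict (\<lambda>q. \<zero>\<^bsub>K q\<^esub>) S"
  by (simp_all add: prod_ring_def)

lemma restrict_PiE_eq:
  assumes "x \<in> PiE S C" "\<And>q. q \<in> S \<Longrightarrow> f q = x q"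
  shows "restrict f S = x"
  using assms by (auto simp: PiE_def extensional_def fun_eq_iff)

lemma PiE_carr[simp]: "x \<in> PiE S (\<lambda>q. carrier (K q)) \<Longrightarrow> q \<in> S \<Longrightarrow> x q \<in> carrier (K q)"
  by auto

lemma prod_cring:
  assumes K: "\<And>q. q \<in> S \<Longrightarrow> cring (K q)"
  shows "cring (prod_ring S K)"
proof (rule cringI)
  show "abelian_group (prod_ring S K)"
  proof (rule abelian_groupI)
    fix x assume x: "x \<in> carrier (prod_ring S K)"
    show "\<exists>y\<in>carrier (prod_ring S K). y \<oplus>\<^bsub>prod_ring S K\<^esub> x = \<zero>\<^bsub>prod_ring S K\<^esub>"
      apply (rule bexI[of _ "restrict (\<lambda>q. \<ominus>\<^bsub>K q\<^esub> x q) S"])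
      using x by (auto simp: prod_ring_simps intro!: restrict_ext
         abelian_group.l_neg[OF ring.is_abelian_group[OF cring.axioms(1)[OF K]]] dest: K cring.cring_simprules)
  qed (auto simp: prod_ring_simps cring.cring_simprules[OF K] monoid.r_one[OF ring.is_monoid[OF cring.axioms(1)[OF K]]] intro!: restrict_ext restrict_PiE_eq)
next
  show "comm_monoid (prod_ring S K)"
   by (rule comm_monoidI)
    (auto simp: prod_ring_simps cring.cring_simprules[OF K] monoid.r_one[OF ring.is_monoid[OF cring.axioms(1)[OF K]]] intro!: restrict_ext restrict_PiE_eq)
qed (auto simp: prod_ring_simps cring.cring_simprules[OF K] monoid.r_one[OF ring.is_monoid[OF cring.axioms(1)[OF K]]] intro!: restrict_ext restrict_PiE_eq)

context cring begin

lemma vnr_idem: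
  assumes "von_neumann_regular R" "x \<in> carrier R"
  shows "\<exists>u\<in>carrier R. u \<otimes> u = u \<and> x \<otimes> u = x \<and> (\<exists>y\<in>carrier R. u = x \<otimes> y)"
proof -
  obtain y where y: "y \<in> carrier R" "x = x \<otimes> x \<otimes> y" using assms unfolding von_neumann_regular_def by blast
  have "(x \<otimes> y) \<otimes> (x \<otimes> y) = (x \<otimes> x \<otimes> y) \<otimes> y" using y(1) assms(2) by algebra
  also have "\<dots> = x \<otimes> y" by (metis y(2))
  finally have 1: "(x \<otimes> y) \<otimes> (x \<otimes> y) = x \<otimes> y" .
  have "x \<otimes> (x \<otimes> y) = x" using y assms by (metis m_assoc m_closed)
  thus ?thesis using 1 y assms by auto
qed

lemma idem_prime:
  assumes "primeideal q R" "u \<in> carrier R" "u \<otimes> u = u"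
  shows "u \<in> q \<or> \<one> \<ominus> u \<in> q"
proof -
  interpret primeideal q R by fact
  have "u \<otimes> (\<one> \<ominus> u) = u \<ominus> u \<otimes> u" using assms by algebra
  also have "\<dots> = \<zero>" using assms by simp
  finally have "u \<otimes> (\<one> \<ominus> u) \<in> q" by (simp add: additive_subgroup.zero_closed)
  thus ?thesis using I_prime assms by auto
qed

lemma idem_prime2:
  assumes "primeideal q R" "u \<in> carrier R" "u \<in> q" "\<one> \<ominus> u \<in> q"
  shows False
proof -
  interpret primeideal q R by fact
  have "\<one> = u \<oplus> (\<one> \<ominus> u)" using assms by algebra
  hence "\<one> \<in> q" using assms by (metis a_closed)
  thus False using one_imp_carrier I_notcarr by auto
qed

lemma prime_incl:
  assumes "von_neumann_regular R" "primeideal p R" "primeideal q R" "p \<subseteq> q"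
  shows "p = q"
proof (rule ccontr)
  assume "p \<noteq> q"
  then obtain x where x: "x \<in> q" "x \<notin> p" using assms by auto
  have xc: "x \<in> carrier R" using x assms(3) by (meson ideal.Icarr primeideal.axioms(1))
  obtain u y where u: "u \<in> carrier R" "u \<otimes> u = u" "x \<otimes> u = x" "y \<in> carrier R" "u = x \<otimes> y"
    using vnr_idem[OF assms(1) xc] by blast
  have uq: "u \<in> q" using u x assms(3) by (metis ideal.I_r_closed primeideal.axioms(1))
  have up: "u \<notin> p" using u x xc assms(2) by (metis ideal.I_l_closed primeideal.axioms(1))
  have "\<one> \<ominus> u \<in> p" using idem_prime[OF assms(2) u(1,2)] up by auto
  thus False using idem_prime2[OF assms(3) u(1) uq] assms(4) by auto
qed

lemma prime_sep:
  assumes "von_neumann_regular R" "primeideal p R" "primeideal q R" "p \<noteq> q"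
  shows "\<exists>u\<in>carrier R. u \<otimes> u = u \<and> u \<in> p \<and> u \<notin> q"
proof -
  have "\<not> p \<subseteq> q" using prime_incl assms by auto
  then obtain x where x: "x \<in> p" "x \<notin> q" by auto
  have xc: "x \<in> carrier R" using x assms(2) by (meson ideal.Icarr primeideal.axioms(1))
  obtain u y where u: "u \<in> carrier R" "u \<otimes> u = u" "x \<otimes> u = x" "y \<in> carrier R" "u = x \<otimes> y"
    using vnr_idem[OF assms(1) xc] by blast
  have uq: "u \<in> p" using u x assms(2) by (metis ideal.I_r_closed primeideal.axioms(1))
  have up: "u \<notin> q" using u x xc assms(3) by (metis ideal.I_l_closed primeideal.axioms(1))
  show ?thesis using u uq up by auto
qed

lemma ann_ideal:
  assumes "ideal M R" "w \<in> carrier R"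
  shows "ideal {x \<in> carrier R. x \<otimes> w \<in> M} R"
proof -
  interpret ideal M R by fact
  show ?thesis
  proof (rule idealI[OF ring_axioms])
    show "subgroup {x \<in> carrier R. x \<otimes> w \<in> M} (add_monoid R)"
    proof (rule subgroup.intro)
      fix x y assume "x \<in> {x \<in> carrier R. x \<otimes> w \<in> M}" "y \<in> {x \<in> carrier R. x \<otimes> w \<in> M}"
      thus "x \<otimes>\<^bsub>add_monoid R\<^esub> y \<in> {x \<in> carrier R. x \<otimes> w \<in> M}"
        using assms by (auto simp: l_distr a_closed)
    next
      fix x assume x: "x \<in> {x \<in> carrier R. x \<otimes> w \<in> M}"
      have "(\<ominus> x) \<otimes> w = \<ominus> (x \<otimes> w)" using x assms by (simp add: l_minus)
      thus "inv\<^bsub>add_monoid R\<^esub> x \<in> {x \<in> carrier R. x \<otimes> w \<in> M}"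
        using x by (auto simp: a_inv_def[symmetric] a_inv_closed)
    qed (use assms in auto)
  next
    fix a x assume "a \<in> {x \<in> carrier R. x \<otimes> w \<in> M}" "x \<in> carrier R"
    thus "x \<otimes> a \<in> {x \<in> carrier R. x \<otimes> w \<in> M}" using assms by (auto simp: m_assoc I_l_closed)
  next
    fix a x assume "a \<in> {x \<in> carrier R. x \<otimes> w \<in> M}" "x \<in> carrier R"
    thus "a \<otimes> x \<in> {x \<in> carrier R. x \<otimes> w \<in> M}" using assms
      by (auto simp: m_assoc I_l_closed) (metis I_l_closed m_assoc m_comm)
  qed
qed

lemma ex_prime:
  assumes "von_neumann_regular R" "a \<in> carrier R" "a \<noteq> \<zero>"
  shows "\<exists>q. primeideal q R \<and> a \<notin> q"
proof -
  obtain u y where u: "u \<in> carrier R" "u \<otimes> u = u" "a \<otimes> u = a" "y \<in> carrier R" "u = a \<otimes> y"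
    using vnr_idem[OF assms(1,2)] by blast
  have u0: "u \<noteq> \<zero>" using u assms by auto
  define S where "S = {J. ideal J R \<and> u \<notin> J}"
  have "\<exists>M\<in>S. \<forall>X\<in>S. M \<subseteq> X \<longrightarrow> X = M"
  proof (rule subset_Zorn_nonempty)
    show "S \<noteq> {}" using zeroideal u0 unfolding S_def by auto
  next
    fix C assume C: "C \<noteq> {}" "subset.chain S C"
    have "subset.chain {I. ideal I R} C" using C unfolding S_def pred_on.chain_def by auto
    from chain_Union_is_ideal[OF this] C have "ideal (\<Union>C) R" by simp
    moreover have "u \<notin> \<Union>C" using C unfolding S_def pred_on.chain_def by auto
    ultimately show "\<Union>C \<in> S" unfolding S_def by auto
  qed
  then obtain M where M: "ideal M R" "u \<notin> M" and Mmax: "\<And>X. ideal X R \<Longrightarrow> u \<notin> X \<Longrightarrow> M \<subseteq> X \<Longrightarrow> X = M"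
    unfolding S_def by auto
  interpret M: ideal M R by fact
  have idem_in: "v \<in> M \<or> \<one> \<ominus> v \<in> M" if v: "v \<in> carrier R" "v \<otimes> v = v" for v
  proof (rule ccontr)
    assume nv: "\<not> (v \<in> M \<or> \<one> \<ominus> v \<in> M)"
    have c: "\<one> \<ominus> v \<in> carrier R" using v by simp
    have zz: "(\<one> \<ominus> v) \<otimes> v = \<zero>" "v \<otimes> (\<one> \<ominus> v) = \<zero>"
    proof -
      have "(\<one> \<ominus> v) \<otimes> v = v \<ominus> v \<otimes> v" "v \<otimes> (\<one> \<ominus> v) = v \<ominus> v \<otimes> v" using v by algebra+
      thus "(\<one> \<ominus> v) \<otimes> v = \<zero>" "v \<otimes> (\<one> \<ominus> v) = \<zero>" using v by auto
    qed
    have sub: "M \<subseteq> {x \<in> carrier R. x \<otimes> w \<in> M}" if "w \<in> carrier R" for w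
      using that M.I_r_closed by auto
    have "u \<in> {x \<in> carrier R. x \<otimes> v \<in> M}"
    proof (rule ccontr)
      assume "u \<notin> {x \<in> carrier R. x \<otimes> v \<in> M}"
      from Mmax[OF ann_ideal[OF M(1) v(1)] this sub[OF v(1)]]
      have "{x \<in> carrier R. x \<otimes> v \<in> M} = M" .
      moreover have "\<one> \<ominus> v \<in> {x \<in> carrier R. x \<otimes> v \<in> M}" using c zz by (simp add: M.zero_closed)
      ultimately show False using nv by auto
    qed
    moreover have "u \<in> {x \<in> carrier R. x \<otimes> (\<one> \<ominus> v) \<in> M}"
    proof (rule ccontr)
      assume "u \<notin> {x \<in> carrier R. x \<otimes> (\<one> \<ominus> v) \<in> M}"
      from Mmax[OF ann_ideal[OF M(1) c] this sub[OF c]]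
      have "{x \<in> carrier R. x \<otimes> (\<one> \<ominus> v) \<in> M} = M" .
      moreover have "v \<in> {x \<in> carrier R. x \<otimes> (\<one> \<ominus> v) \<in> M}" using v zz by (simp add: M.zero_closed)
      ultimately show False using nv by auto
    qed
    ultimately have "u \<otimes> v \<in> M" "u \<otimes> (\<one> \<ominus> v) \<in> M" by auto
    moreover have "u = u \<otimes> v \<oplus> u \<otimes> (\<one> \<ominus> v)" using u v by algebra
    ultimately show False using M(2) by (metis M.a_closed)
  qed
  have "primeideal M R"
  proof (rule primeidealI[OF M(1) is_cring])
    show "carrier R \<noteq> M" using M u by auto
  next
    fix x z assume xz: "x \<in> carrier R" "z \<in> carrier R" "x \<otimes> z \<in> M"
    show "x \<in> M \<or> z \<in> M"
    proof (rule ccontr)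
      assume n: "\<not> (x \<in> M \<or> z \<in> M)"
      obtain v1 y1 where v1: "v1 \<in> carrier R" "v1 \<otimes> v1 = v1" "x \<otimes> v1 = x" "y1 \<in> carrier R" "v1 = x \<otimes> y1"
        using vnr_idem[OF assms(1) xz(1)] by blast
      obtain v2 y2 where v2: "v2 \<in> carrier R" "v2 \<otimes> v2 = v2" "z \<otimes> v2 = z" "y2 \<in> carrier R" "v2 = z \<otimes> y2"
        using vnr_idem[OF assms(1) xz(2)] by blast
      have "v1 \<notin> M" using v1 n M.I_l_closed xz by metis
      hence m1: "\<one> \<ominus> v1 \<in> M" using idem_in v1 by blast
      have "v2 \<notin> M" using v2 n M.I_l_closed xz by metis
      hence m2: "\<one> \<ominus> v2 \<in> M" using idem_in v2 by blast
      have "v1 \<otimes> v2 = (x \<otimes> z) \<otimes> (y1 \<otimes> y2)" using v1 v2 xz by algebra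
      hence m3: "v1 \<otimes> v2 \<in> M" using xz v1 v2 M.I_r_closed by auto
      have "v1 = v1 \<otimes> v2 \<oplus> v1 \<otimes> (\<one> \<ominus> v2)" using v1 v2 by algebra
      moreover have "v1 \<otimes> (\<one> \<ominus> v2) \<in> M" using m2 v1 M.I_l_closed by auto
      ultimately have "v1 \<in> M" using m3 by (metis M.a_closed)
      thus False using \<open>v1 \<notin> M\<close> by simp
    qed
  qed
  moreover have "a \<notin> M" by (metis M.I_r_closed u(4) u(5) M(2))
  ultimately show ?thesis by blast
qed

end

locale thm9 =
  fixes A :: "'a ring" and P :: "'a set" and K :: "'a set \<Rightarrow> 'b ring"
    and phi :: "'a set \<Rightarrow> 'a \<Rightarrow> 'b" and p :: "'a set"
  assumes por: "poring A P" and vnr: "von_neumann_regular A" and pS: "p \<in> Spec A"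
    and epf: "epof A P K phi"
begin

lemma Acr: "cring A" using por poring_def by auto

sublocale A: cring A by (rule Acr)

lemma Kf: "q \<in> Spec A \<Longrightarrow> field (K q)" using epf by (auto simp: epof_def real_closed_field_def)
lemma Kc: "q \<in> Spec A \<Longrightarrow> cring (K q)" using Kf fieldE(1) by blast
lemma Kd: "q \<in> Spec A \<Longrightarrow> domain (K q)" using Kf field.axioms(1) by blast
lemma phom: "q \<in> Spec A \<Longrightarrow> phi q \<in> ring_hom A (K q)" using epf by (auto simp: epof_def)
lemma ker: "q \<in> Spec A \<Longrightarrow> a \<in> carrier A \<Longrightarrow> phi q a = \<zero>\<^bsub>K q\<^esub> \<longleftrightarrow> a \<in> q"
  using epf unfolding epof_def by blast
lemma primeS: "q \<in> Spec A \<Longrightarrow> primeideal q A" by (simp add: Spec_def)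

lemmas Ksimps = cring.cring_simprules[OF Kc]

lemma K_r_one[simp]: "q \<in> Spec A \<Longrightarrow> x \<in> carrier (K q) \<Longrightarrow> x \<otimes>\<^bsub>K q\<^esub> \<one>\<^bsub>K q\<^esub> = x"
  by (rule monoid.r_one[OF ring.is_monoid[OF cring.axioms(1)[OF Kc]]])
lemma K_l_one[simp]: "q \<in> Spec A \<Longrightarrow> x \<in> carrier (K q) \<Longrightarrow> \<one>\<^bsub>K q\<^esub> \<otimes>\<^bsub>K q\<^esub> x = x"
  by (simp add: Ksimps)
lemma K_r_null[simp]: "q \<in> Spec A \<Longrightarrow> x \<in> carrier (K q) \<Longrightarrow> x \<otimes>\<^bsub>K q\<^esub> \<zero>\<^bsub>K q\<^esub> = \<zero>\<^bsub>K q\<^esub>"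
  by (simp add: Ksimps)
lemma K_l_null[simp]: "q \<in> Spec A \<Longrightarrow> x \<in> carrier (K q) \<Longrightarrow> \<zero>\<^bsub>K q\<^esub> \<otimes>\<^bsub>K q\<^esub> x = \<zero>\<^bsub>K q\<^esub>"
  by (simp add: Ksimps)
lemma K_zero[simp]: "q \<in> Spec A \<Longrightarrow> \<zero>\<^bsub>K q\<^esub> \<in> carrier (K q)"
  by (simp add: Ksimps)
lemma K_one[simp]: "q \<in> Spec A \<Longrightarrow> \<one>\<^bsub>K q\<^esub> \<in> carrier (K q)"
  by (simp add: Ksimps)
lemma K_mult[simp]: "q \<in> Spec A \<Longrightarrow> x \<in> carrier (K q) \<Longrightarrow> y \<in> carrier (K q) \<Longrightarrow> x \<otimes>\<^bsub>K q\<^esub> y \<in> carrier (K q)"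
  by (simp add: Ksimps)
lemma K_add[simp]: "q \<in> Spec A \<Longrightarrow> x \<in> carrier (K q) \<Longrightarrow> y \<in> carrier (K q) \<Longrightarrow> x \<oplus>\<^bsub>K q\<^esub> y \<in> carrier (K q)"
  by (simp add: Ksimps)


lemma Kone_zero: "q \<in> Spec A \<Longrightarrow> \<one>\<^bsub>K q\<^esub> \<noteq> \<zero>\<^bsub>K q\<^esub>"
  by (rule domain.one_not_zero[OF Kd])

lemma phi_closed[simp]: "q \<in> Spec A \<Longrightarrow> a \<in> carrier A \<Longrightarrow> phi q a \<in> carrier (K q)"
  by (rule ring_hom_closed[OF phom])
lemma phi_mult[simp]: "q \<in> Spec A \<Longrightarrow> a \<in> carrier A \<Longrightarrow> b \<in> carrier A \<Longrightarrow> phi q (a \<otimes>\<^bsub>A\<^esub> b) = phi q a \<otimes>\<^bsub>K q\<^esub> phi q b"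
  by (rule ring_hom_mult[OF phom])
lemma phi_add[simp]: "q \<in> Spec A \<Longrightarrow> a \<in> carrier A \<Longrightarrow> b \<in> carrier A \<Longrightarrow> phi q (a \<oplus>\<^bsub>A\<^esub> b) = phi q a \<oplus>\<^bsub>K q\<^esub> phi q b"
  by (rule ring_hom_add[OF phom])
lemma phi_one[simp]: "q \<in> Spec A \<Longrightarrow> phi q \<one>\<^bsub>A\<^esub> = \<one>\<^bsub>K q\<^esub>"
  by (rule ring_hom_one[OF phom])

abbreviation B :: "('a set \<Rightarrow> 'b) ring" where "B \<equiv> prod_ring (Spec A) K"

lemma Bc: "cring B" by (rule prod_cring) (rule Kc)

sublocale B: cring B by (rule Bc)

abbreviation e where "e \<equiv> (\<lambda>q\<in>Spec A. if q = p then \<zero>\<^bsub>K q\<^esub> else \<one>\<^bsub>K q\<^esub>)"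
abbreviation ep where "ep \<equiv> (\<lambda>q\<in>Spec A. if q = p then \<one>\<^bsub>K q\<^esub> else \<zero>\<^bsub>K q\<^esub>)"
abbreviation d where "d \<equiv> diag_map A phi"
abbreviation EB where "EB \<equiv> {e \<otimes>\<^bsub>B\<^esub> b | b. b \<in> carrier B}"

lemma Bcarr: "carrier B = PiE (Spec A) (\<lambda>q. carrier (K q))" by (simp add: prod_ring_simps)
lemma Bmult_at[simp]: "q \<in> Spec A \<Longrightarrow> (x \<otimes>\<^bsub>B\<^esub> y) q = x q \<otimes>\<^bsub>K q\<^esub> y q" by (simp add: prod_ring_simps)
lemma Badd_at[simp]: "q \<in> Spec A \<Longrightarrow> (x \<oplus>\<^bsub>B\<^esub> y) q = x q \<oplus>\<^bsub>K q\<^esub> y q" by (simp add: prod_ring_simps)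
lemma Bzero_at[simp]: "q \<in> Spec A \<Longrightarrow> \<zero>\<^bsub>B\<^esub> q = \<zero>\<^bsub>K q\<^esub>" by (simp add: prod_ring_simps)
lemma Bone_at[simp]: "q \<in> Spec A \<Longrightarrow> \<one>\<^bsub>B\<^esub> q = \<one>\<^bsub>K q\<^esub>" by (simp add: prod_ring_simps)
lemma d_at[simp]: "q \<in> Spec A \<Longrightarrow> d a q = phi q a" by (simp add: diag_map_def)
lemma Bcarr_at[simp]: "x \<in> carrier B \<Longrightarrow> q \<in> Spec A \<Longrightarrow> x q \<in> carrier (K q)" by (auto simp: Bcarr)

lemma Beq: "x \<in> carrier B \<Longrightarrow> y \<in> carrier B \<Longrightarrow> (\<And>q. q \<in> Spec A \<Longrightarrow> x q = y q) \<Longrightarrow> x = y"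
  by (rule PiE_ext) (auto simp: Bcarr)

lemma e_carr[simp]: "e \<in> carrier B" by (simp add: Bcarr)
lemma ep_carr[simp]: "ep \<in> carrier B" by (simp add: Bcarr)
lemma d_carr[simp]: "a \<in> carrier A \<Longrightarrow> d a \<in> carrier B" by (auto simp: Bcarr diag_map_def)

lemma dhom: "d \<in> ring_hom A B"
proof (rule ring_hom_memI)
  fix x y assume xy: "x \<in> carrier A" "y \<in> carrier A"
  show "d x \<in> carrier B" using xy by simp
  show "d (x \<otimes>\<^bsub>A\<^esub> y) = d x \<otimes>\<^bsub>B\<^esub> d y"
    by (rule Beq) (simp_all add: xy B.m_closed)
  show "d (x \<oplus>\<^bsub>A\<^esub> y) = d x \<oplus>\<^bsub>B\<^esub> d y"
    by (rule Beq) (simp_all add: xy B.a_closed)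
next
  show "d \<one>\<^bsub>A\<^esub> = \<one>\<^bsub>B\<^esub>"
    by (rule Beq) simp_all
qed

lemma e_ep: "e \<otimes>\<^bsub>B\<^esub> ep = \<zero>\<^bsub>B\<^esub>"
  by (rule Beq) (simp_all add: pS)

lemma EB_iff: "x \<in> EB \<longleftrightarrow> x \<in> carrier B \<and> x p = \<zero>\<^bsub>K p\<^esub>"
proof
  assume "x \<in> EB"
  then obtain b where "b \<in> carrier B" "x = e \<otimes>\<^bsub>B\<^esub> b" by auto
  thus "x \<in> carrier B \<and> x p = \<zero>\<^bsub>K p\<^esub>" using pS by simp
next
  assume x: "x \<in> carrier B \<and> x p = \<zero>\<^bsub>K p\<^esub>"
  have "x = e \<otimes>\<^bsub>B\<^esub> x" by (rule Beq) (use x pS in \<open>simp_all\<close>)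
  thus "x \<in> EB" using x by auto
qed

lemma EB_ideal: "ideal EB B"
proof -
  have "EB = PIdl\<^bsub>B\<^esub> e"
  proof (intro equalityI subsetI)
    fix x assume "x \<in> EB"
    then obtain b where b: "b \<in> carrier B" "x = e \<otimes>\<^bsub>B\<^esub> b" by auto
    hence "x = b \<otimes>\<^bsub>B\<^esub> e" using B.m_comm[OF e_carr b(1)] by simp
    thus "x \<in> PIdl\<^bsub>B\<^esub> e" using b unfolding cgenideal_def by blast
  next
    fix x assume "x \<in> PIdl\<^bsub>B\<^esub> e"
    then obtain b where b: "b \<in> carrier B" "x = b \<otimes>\<^bsub>B\<^esub> e" unfolding cgenideal_def by auto
    hence "x = e \<otimes>\<^bsub>B\<^esub> b" using B.m_comm[OF e_carr b(1)] by simp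
    thus "x \<in> EB" using b by blast
  qed
  thus ?thesis using B.cgenideal_ideal by simp
qed

lemma ep_notin: "ep \<notin> EB" using EB_iff pS Kone_zero by auto




lemma Qzero: "\<zero>\<^bsub>B Quot I\<^esub> = I" by (simp add: FactRing_def)

lemma Q_mult: "ideal I B \<Longrightarrow> x \<in> carrier B \<Longrightarrow> y \<in> carrier B \<Longrightarrow>
   (I +>\<^bsub>B\<^esub> x) \<otimes>\<^bsub>B Quot I\<^esub> (I +>\<^bsub>B\<^esub> y) = I +>\<^bsub>B\<^esub> (x \<otimes>\<^bsub>B\<^esub> y)"
  by (simp add: FactRing_def ideal.rcoset_mult_add)

lemma Q_carr: "X \<in> carrier (B Quot I) \<Longrightarrow> \<exists>x\<in>carrier B. X = I +>\<^bsub>B\<^esub> x"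
  by (auto simp: FactRing_def A_RCOSETS_def')

lemma dh: "ring_hom_ring A B d"
  by (rule ring_hom_ringI2[OF A.ring_axioms B.ring_axioms dhom])

lemma rev_dir:
  assumes I: "ideal I B" "I \<subseteq> EB" and ess: "essential_extension A (B Quot I) (\<lambda>a. I +>\<^bsub>B\<^esub> d a)"
  shows "isolated_point A p"
proof -
  interpret I: ideal I B by fact
  have Qc: "cring (B Quot I)" by (rule I.quotient_is_cring[OF Bc])
  interpret Q: cring "B Quot I" by fact
  interpret dh: ring_hom_ring A B d by (rule dh)
  define X where "X = I +>\<^bsub>B\<^esub> ep"
  have Xc: "X \<in> carrier (B Quot I)" unfolding X_def using ring_hom_closed[OF I.rcos_ring_hom ep_carr] .
  have epI: "ep \<notin> I" using ep_notin I(2) by auto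
  have XI: "X \<noteq> I" using I.a_rcos_self[OF ep_carr] epI unfolding X_def by auto
  have J: "ideal (PIdl\<^bsub>B Quot I\<^esub> X) (B Quot I)" by (rule Q.cgenideal_ideal[OF Xc])
  have Jne: "PIdl\<^bsub>B Quot I\<^esub> X \<noteq> {\<zero>\<^bsub>B Quot I\<^esub>}"
    using Q.cgenideal_self[OF Xc] XI Qzero by auto
  from ess J Jne obtain a where a: "a \<in> carrier A" "I +>\<^bsub>B\<^esub> d a \<in> PIdl\<^bsub>B Quot I\<^esub> X"
      "I +>\<^bsub>B\<^esub> d a \<noteq> \<zero>\<^bsub>B Quot I\<^esub>"
    unfolding essential_extension_def by blast
  have inj: "inj_on (\<lambda>a. I +>\<^bsub>B\<^esub> d a) (carrier A)" using ess unfolding essential_extension_def by blast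
  from a(2) obtain Y where Y: "Y \<in> carrier (B Quot I)" "I +>\<^bsub>B\<^esub> d a = Y \<otimes>\<^bsub>B Quot I\<^esub> X"
    unfolding cgenideal_def by blast
  from Q_carr[OF Y(1)] obtain b where b: "b \<in> carrier B" "Y = I +>\<^bsub>B\<^esub> b" by blast
  have "I +>\<^bsub>B\<^esub> d a = I +>\<^bsub>B\<^esub> (b \<otimes>\<^bsub>B\<^esub> ep)"
    using Y(2) b Q_mult[OF I(1) b(1) ep_carr] unfolding X_def by simp
  hence "d a \<in> I +>\<^bsub>B\<^esub> (b \<otimes>\<^bsub>B\<^esub> ep)" using I.a_rcos_self[of "d a"] a(1) by simp
  hence diffI: "d a \<ominus>\<^bsub>B\<^esub> (b \<otimes>\<^bsub>B\<^esub> ep) \<in> I"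
    using I.a_rcos_module_minus[OF B.ring_axioms, of "b \<otimes>\<^bsub>B\<^esub> ep" "d a"] a(1) b(1) by simp
  have bc: "b \<otimes>\<^bsub>B\<^esub> ep \<in> carrier B" using b(1) by (rule B.m_closed) simp
  have eb0: "e \<otimes>\<^bsub>B\<^esub> (b \<otimes>\<^bsub>B\<^esub> ep) = \<zero>\<^bsub>B\<^esub>"
    using B.m_lcomm[OF e_carr b(1) ep_carr] e_ep B.r_null[OF b(1)] by simp
  have "e \<otimes>\<^bsub>B\<^esub> (d a \<ominus>\<^bsub>B\<^esub> (b \<otimes>\<^bsub>B\<^esub> ep)) = e \<otimes>\<^bsub>B\<^esub> (d a \<oplus>\<^bsub>B\<^esub> \<ominus>\<^bsub>B\<^esub> (b \<otimes>\<^bsub>B\<^esub> ep))"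
    using B.minus_eq[of "d a" "b \<otimes>\<^bsub>B\<^esub> ep"] by simp
  also have "\<dots> = e \<otimes>\<^bsub>B\<^esub> d a \<oplus>\<^bsub>B\<^esub> e \<otimes>\<^bsub>B\<^esub> (\<ominus>\<^bsub>B\<^esub> (b \<otimes>\<^bsub>B\<^esub> ep))"
    by (rule B.r_distr) (use a(1) bc in simp_all)
  also have "e \<otimes>\<^bsub>B\<^esub> (\<ominus>\<^bsub>B\<^esub> (b \<otimes>\<^bsub>B\<^esub> ep)) = \<ominus>\<^bsub>B\<^esub> (e \<otimes>\<^bsub>B\<^esub> (b \<otimes>\<^bsub>B\<^esub> ep))"
    by (rule B.r_minus) (use bc in simp_all)
  also have "e \<otimes>\<^bsub>B\<^esub> d a \<oplus>\<^bsub>B\<^esub> \<ominus>\<^bsub>B\<^esub> (e \<otimes>\<^bsub>B\<^esub> (b \<otimes>\<^bsub>B\<^esub> ep)) = e \<otimes>\<^bsub>B\<^esub> d a"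
    unfolding eb0 using a(1) by simp
  finally have eqe: "e \<otimes>\<^bsub>B\<^esub> (d a \<ominus>\<^bsub>B\<^esub> (b \<otimes>\<^bsub>B\<^esub> ep)) = e \<otimes>\<^bsub>B\<^esub> d a" .
  have edaI: "e \<otimes>\<^bsub>B\<^esub> d a \<in> I" using I.I_l_closed[OF diffI e_carr] unfolding eqe .
  have anp: "a \<notin> p"
  proof
    assume ap: "a \<in> p"
    have "e \<otimes>\<^bsub>B\<^esub> d a = d a"
      using ker[OF pS a(1)] ap by (intro Beq) (simp_all add: a(1) pS)
    hence "d a \<in> I" using edaI by simp
    hence "I +>\<^bsub>B\<^esub> d a = I" using B.a_rcos_zero[OF I(1)] by simp
    thus False using a(3) Qzero by simp
  qed
  have aq: "a \<in> q" if q: "q \<in> Spec A" "q \<noteq> p" for q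
  proof (rule ccontr)
    assume naq: "a \<notin> q"
    obtain u where u: "u \<in> carrier A" "u \<otimes>\<^bsub>A\<^esub> u = u" "u \<in> p" "u \<notin> q"
      using A.prime_sep[OF vnr primeS[OF pS] primeS[OF q(1)]] q(2) by metis
    have "d (a \<otimes>\<^bsub>A\<^esub> u) = (e \<otimes>\<^bsub>B\<^esub> d a) \<otimes>\<^bsub>B\<^esub> d u"
    proof (rule Beq)
      fix r assume r: "r \<in> Spec A"
      show "d (a \<otimes>\<^bsub>A\<^esub> u) r = (e \<otimes>\<^bsub>B\<^esub> d a \<otimes>\<^bsub>B\<^esub> d u) r"
      proof (cases "r = p")
        case True
        have "phi p u = \<zero>\<^bsub>K p\<^esub>" using ker[OF pS u(1)] u(3) by simp
        thus ?thesis using True pS a(1) u(1) by simp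
      qed (use r a(1) u(1) in simp)
    qed (use a(1) u(1) in \<open>simp_all add: B.m_closed\<close>)
    hence "d (a \<otimes>\<^bsub>A\<^esub> u) \<in> I" using I.I_r_closed[OF edaI d_carr[OF u(1)]] by simp
    hence "I +>\<^bsub>B\<^esub> d (a \<otimes>\<^bsub>A\<^esub> u) = I +>\<^bsub>B\<^esub> d \<zero>\<^bsub>A\<^esub>"
      using B.a_rcos_zero[OF I(1)] dh.hom_zero I.zero_closed by simp
    hence "a \<otimes>\<^bsub>A\<^esub> u = \<zero>\<^bsub>A\<^esub>" using inj a(1) u(1) unfolding inj_on_def by simp
    hence "a \<otimes>\<^bsub>A\<^esub> u \<in> q" using primeS[OF q(1)] by (simp add: additive_subgroup.zero_closed ideal.axioms(1) primeideal.axioms(1))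
    thus False using primeideal.I_prime[OF primeS[OF q(1)] a(1) u(1)] naq u(4) by blast
  qed
  have pc: "p \<subseteq> carrier A" using primeS[OF pS] by (meson ideal.Icarr primeideal.axioms(1) subsetI)
  show ?thesis unfolding isolated_point_def zariski_open_def zariski_closed_def
  proof (intro conjI)
    show "\<exists>S\<subseteq>carrier A. Spec A - {p} = {q \<in> Spec A. S \<subseteq> q}"
      by (rule exI[of _ "{a}"]) (use a(1) anp aq in auto)
    show "\<exists>S\<subseteq>carrier A. {p} = {q \<in> Spec A. S \<subseteq> q}"
      by (rule exI[of _ p]) (use pc pS A.prime_incl[OF vnr primeS[OF pS] primeS] in auto)
  qed (use pS in auto)
qed

end


context thm9 begin
lemma fwd_dir:
  assumes iso: "isolated_point A p"
  shows "\<exists>I. ideal I B \<and> I \<subseteq> EB \<and> essential_extension A (B Quot I) (\<lambda>a. I +>\<^bsub>B\<^esub> d a)"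
proof -
  interpret dh: ring_hom_ring A B d by (rule dh)
  have zc: "zariski_closed A (Spec A - {p})" using iso by (simp add: isolated_point_def zariski_open_def)
  then obtain S0 where S0c: "S0 \<subseteq> carrier A" and S0e: "Spec A - {p} = {q\<in>Spec A. S0 \<subseteq> q}"
    unfolding zariski_closed_def by (elim exE conjE)
  have S0q: "q \<noteq> p \<longleftrightarrow> S0 \<subseteq> q" if "q \<in> Spec A" for q
    using arg_cong[OF S0e, of "\<lambda>X. q \<in> X"] that by simp
  have "\<not> S0 \<subseteq> p" using S0q[OF pS] by simp
  then obtain s where s: "s \<in> S0" "s \<notin> p" by auto
  have sc: "s \<in> carrier A" using s S0c by auto
  have sq: "s \<in> q" if "q \<in> Spec A" "q \<noteq> p" for q using S0q[OF that(1)] that(2) s(1) by auto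
  obtain u y where u: "u \<in> carrier A" "u \<otimes>\<^bsub>A\<^esub> u = u" "s \<otimes>\<^bsub>A\<^esub> u = s" "y \<in> carrier A" "u = s \<otimes>\<^bsub>A\<^esub> y"
    using A.vnr_idem[OF vnr sc] by blast
  have up: "u \<notin> p" using u s sc primeS[OF pS] by (metis ideal.I_l_closed primeideal.axioms(1))
  have uq: "u \<in> q" if "q \<in> Spec A" "q \<noteq> p" for q
    using sq[OF that] u primeS[OF that(1)] by (metis ideal.I_r_closed primeideal.axioms(1))
  have du: "d u = ep"
  proof (rule Beq)
    fix q assume q: "q \<in> Spec A"
    show "d u q = ep q"
    proof (cases "q = p")
      case True
      have nz: "phi p u \<noteq> \<zero>\<^bsub>K p\<^esub>" using ker[OF pS u(1)] up by simp
      have eq: "phi p u \<otimes>\<^bsub>K p\<^esub> phi p u = phi p u \<otimes>\<^bsub>K p\<^esub> \<one>\<^bsub>K p\<^esub>"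
        using u(1,2) pS phi_mult[OF pS u(1) u(1)] by simp
      have "phi p u = \<one>\<^bsub>K p\<^esub>"
        using eq domain.m_lcancel[OF Kd[OF pS] nz phi_closed[OF pS u(1)] phi_closed[OF pS u(1)] K_one[OF pS]] by blast
      thus ?thesis using True q by simp
    next
      case False
      thus ?thesis using q ker[OF q u(1)] uq[OF q False] by simp
    qed
  qed (use u(1) in simp_all)
  define SS where "SS = {I. ideal I B \<and> I \<subseteq> EB \<and> (\<forall>a\<in>carrier A. d a \<in> I \<longrightarrow> a = \<zero>\<^bsub>A\<^esub>)}"
  have "\<exists>M\<in>SS. \<forall>X\<in>SS. M \<subseteq> X \<longrightarrow> X = M"
  proof (rule subset_Zorn_nonempty)
    have "{\<zero>\<^bsub>B\<^esub>} \<in> SS"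
      unfolding SS_def
    proof (intro CollectI conjI ballI impI)
      show "ideal {\<zero>\<^bsub>B\<^esub>} B" by (rule B.zeroideal)
      show "{\<zero>\<^bsub>B\<^esub>} \<subseteq> EB" using EB_iff pS by simp
    next
      fix a assume a: "a \<in> carrier A" "d a \<in> {\<zero>\<^bsub>B\<^esub>}"
      show "a = \<zero>\<^bsub>A\<^esub>"
      proof (rule ccontr)
        assume "a \<noteq> \<zero>\<^bsub>A\<^esub>"
        then obtain q where q: "primeideal q A" "a \<notin> q" using A.ex_prime[OF vnr a(1)] by blast
        have qS: "q \<in> Spec A" using q(1) by (simp add: Spec_def)
        have "phi q a \<noteq> \<zero>\<^bsub>K q\<^esub>" using ker[OF qS a(1)] q(2) by simp
        moreover have "d a q = \<zero>\<^bsub>B\<^esub> q" using a(2) by simp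
        ultimately show False using qS by simp
      qed
    qed
    thus "SS \<noteq> {}" by blast
  next
    fix C assume C: "C \<noteq> {}" "subset.chain SS C"
    have "subset.chain {I. ideal I B} C" using C unfolding SS_def pred_on.chain_def by auto
    from B.chain_Union_is_ideal[OF this] C have "ideal (\<Union>C) B" by simp
    moreover have "\<Union>C \<subseteq> EB" using C unfolding SS_def pred_on.chain_def by auto
    moreover have "\<forall>a\<in>carrier A. d a \<in> \<Union>C \<longrightarrow> a = \<zero>\<^bsub>A\<^esub>"
      using C unfolding SS_def pred_on.chain_def by blast
    ultimately show "\<Union>C \<in> SS" by (simp add: SS_def)
  qed
  then obtain I where IS: "I \<in> SS" and Imax0: "\<forall>X\<in>SS. I \<subseteq> X \<longrightarrow> X = I" by (elim bexE)
  have I1: "ideal I B" and I2: "I \<subseteq> EB" using IS unfolding SS_def by simp_all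
  have I3: "a = \<zero>\<^bsub>A\<^esub>" if "a \<in> carrier A" "d a \<in> I" for a using IS that unfolding SS_def by simp
  note I = I1 I2 I3
  have Imax: "X = I" if "X \<in> SS" "I \<subseteq> X" for X using Imax0 that by simp
  interpret I: ideal I B by fact
  have ep_nI: "ep \<notin> I" using ep_notin I(2) by auto
  have hom: "(\<lambda>a. I +>\<^bsub>B\<^esub> d a) \<in> ring_hom A (B Quot I)"
  proof -
    have "((+>\<^bsub>B\<^esub>) I) \<circ> d \<in> ring_hom A (B Quot I)" by (rule ring_hom_trans[OF dhom I.rcos_ring_hom])
    moreover have "((+>\<^bsub>B\<^esub>) I) \<circ> d = (\<lambda>a. I +>\<^bsub>B\<^esub> d a)" by (simp add: comp_def)
    ultimately show ?thesis by simp
  qed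
  have inj: "inj_on (\<lambda>a. I +>\<^bsub>B\<^esub> d a) (carrier A)"
  proof (rule inj_onI)
    fix x z assume xz: "x \<in> carrier A" "z \<in> carrier A" "I +>\<^bsub>B\<^esub> d x = I +>\<^bsub>B\<^esub> d z"
    have "d x \<in> I +>\<^bsub>B\<^esub> d z" using I.a_rcos_self[of "d x"] xz by simp
    hence m: "d x \<ominus>\<^bsub>B\<^esub> d z \<in> I"
      using I.a_rcos_module_minus[OF B.ring_axioms, of "d z" "d x"] xz by simp
    have "d (x \<ominus>\<^bsub>A\<^esub> z) = d x \<ominus>\<^bsub>B\<^esub> d z"
      using xz by (simp add: A.minus_eq B.minus_eq dh.hom_add)
    hence "x \<ominus>\<^bsub>A\<^esub> z = \<zero>\<^bsub>A\<^esub>" using I(3) m xz by simp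
    moreover have "x = (x \<ominus>\<^bsub>A\<^esub> z) \<oplus>\<^bsub>A\<^esub> z" using xz by algebra
    ultimately show "x = z" using xz by simp
  qed
  have ess: "\<exists>a\<in>carrier A. I +>\<^bsub>B\<^esub> d a \<in> J \<and> I +>\<^bsub>B\<^esub> d a \<noteq> \<zero>\<^bsub>B Quot I\<^esub>"
    if J: "ideal J (B Quot I)" "J \<noteq> {\<zero>\<^bsub>B Quot I\<^esub>}" for J
  proof -
    interpret J: ideal J "B Quot I" by fact
    have "\<zero>\<^bsub>B Quot I\<^esub> \<in> J" by (rule additive_subgroup.zero_closed[OF ideal.axioms(1)[OF J(1)]])
    hence IJ: "I \<in> J" by (simp only: Qzero)
    have "J \<noteq> {I}" using J(2) by (simp add: Qzero)
    then obtain X0 where "\<not> (X0 \<in> J \<longleftrightarrow> X0 \<in> {I})" unfolding set_eq_iff by blast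
    hence X: "X0 \<in> J" "X0 \<noteq> I" using IJ by auto
    define X where "X = X0"
    note X = X[folded X_def]
    obtain x where x: "x \<in> carrier B" "X = I +>\<^bsub>B\<^esub> x" using Q_carr J.Icarr[OF X(1)] by blast
    have xI: "x \<notin> I" using X x B.a_rcos_zero[OF I(1)] by auto
    show ?thesis
    proof (cases "x p = \<zero>\<^bsub>K p\<^esub>")
      case False
      define c where "c = (\<lambda>q\<in>Spec A. if q = p then inv\<^bsub>K p\<^esub> (x p) else \<zero>\<^bsub>K q\<^esub>)"
      have xpU: "x p \<in> Units (K p)" using field.field_Units[OF Kf[OF pS]] False x(1) pS by simp
      have cc: "c \<in> carrier B" unfolding c_def Bcarr
        using monoid.Units_inv_closed[OF ring.is_monoid[OF cring.axioms(1)[OF Kc[OF pS]]] xpU] by auto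
      have xc: "x \<otimes>\<^bsub>B\<^esub> c = ep"
      proof (rule Beq)
        fix q assume q: "q \<in> Spec A"
        show "(x \<otimes>\<^bsub>B\<^esub> c) q = ep q"
        proof (cases "q = p")
          case True
          thus ?thesis using q monoid.Units_r_inv[OF ring.is_monoid[OF cring.axioms(1)[OF Kc[OF pS]]] xpU]
            unfolding c_def by simp
        qed (use q x(1) in \<open>simp add: c_def\<close>)
      qed (use x(1) cc in simp_all)
      have "X \<otimes>\<^bsub>B Quot I\<^esub> (I +>\<^bsub>B\<^esub> c) \<in> J"
        using J.I_r_closed[OF X(1)] ring_hom_closed[OF I.rcos_ring_hom cc] by blast
      hence "I +>\<^bsub>B\<^esub> d u \<in> J" using Q_mult[OF I(1) x(1) cc] x(2) xc du by simp
      moreover have "I +>\<^bsub>B\<^esub> d u \<noteq> \<zero>\<^bsub>B Quot I\<^esub>"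
        using I.a_rcos_self[OF ep_carr] ep_nI du Qzero by auto
      ultimately show ?thesis using u(1) by blast
    next
      case True
      have xE: "x \<in> EB" using EB_iff x(1) True by simp
      define I' where "I' = {r \<in> carrier B. I +>\<^bsub>B\<^esub> r \<in> J} \<inter> EB"
      have I'id: "ideal I' B" unfolding I'_def
        by (rule B.i_intersect[OF ring_hom_ring.ideal_vimage[OF I.rcos_ring_hom_ring J(1)] EB_ideal])
      have II': "I \<subseteq> I'"
      proof
        fix i assume i: "i \<in> I"
        have "I +>\<^bsub>B\<^esub> i = I" using B.a_rcos_zero[OF I(1) i] .
        thus "i \<in> I'" unfolding I'_def using i I(2) IJ I.Icarr by auto
      qed
      have xI': "x \<in> I'" unfolding I'_def using x X xE by auto
      have "I' \<noteq> I" using xI' xI by auto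
      hence "I' \<notin> SS" using Imax II' by auto
      moreover have "I' \<subseteq> EB" unfolding I'_def by blast
      ultimately have "\<not> (\<forall>a\<in>carrier A. d a \<in> I' \<longrightarrow> a = \<zero>\<^bsub>A\<^esub>)" using I'id unfolding SS_def by simp
      then obtain a where a: "a \<in> carrier A" "d a \<in> I'" "a \<noteq> \<zero>\<^bsub>A\<^esub>" by blast
      have "I +>\<^bsub>B\<^esub> d a \<in> J" using a(2) unfolding I'_def by simp
      moreover have "d a \<notin> I" using I(3) a by blast
      hence "I +>\<^bsub>B\<^esub> d a \<noteq> \<zero>\<^bsub>B Quot I\<^esub>" using I.a_rcos_self[OF d_carr[OF a(1)]] Qzero by auto
      ultimately show ?thesis using a(1) by blast
    qed
  qed
  show ?thesis unfolding essential_extension_def using I(1,2) hom inj ess by blast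
qed

end



theorem mainTheorem9:
  fixes A :: "'a ring" and P :: "'a set" and K :: "'a set \<Rightarrow> 'b ring"
    and phi :: "'a set \<Rightarrow> 'a \<Rightarrow> 'b" and p :: "'a set"
  assumes "poring A P" and "real_ring A" and "von_neumann_regular A" and "baer_ring A"
    and "p \<in> Spec A"
    and "epof A P K phi"
  shows "isolated_point A p \<longleftrightarrow>
    (let B = prod_ring (Spec A) K;
         e = (\<lambda>q\<in>Spec A. if q = p then \<zero>\<^bsub>K q\<^esub> else \<one>\<^bsub>K q\<^esub>)
     in \<exists>I. ideal I B \<and> I \<subseteq> {e \<otimes>\<^bsub>B\<^esub> b | b. b \<in> carrier B}
          \<and> essential_extension A (B Quot I) (\<lambda>a. I +>\<^bsub>B\<^esub> diag_map A phi a))"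
proof -
  have T: "thm9 A P K phi p" using assms(1,3,5,6) by (simp add: thm9_def)
  have "isolated_point A p \<longleftrightarrow>
    (\<exists>I. ideal I (prod_ring (Spec A) K) \<and>
       I \<subseteq> {(\<lambda>q\<in>Spec A. if q = p then \<zero>\<^bsub>K q\<^esub> else \<one>\<^bsub>K q\<^esub>) \<otimes>\<^bsub>prod_ring (Spec A) K\<^esub> b | b. b \<in> carrier (prod_ring (Spec A) K)}
          \<and> essential_extension A (prod_ring (Spec A) K Quot I) (\<lambda>a. I +>\<^bsub>prod_ring (Spec A) K\<^esub> diag_map A phi a))"
    using thm9.rev_dir[OF T] thm9.fwd_dir[OF T] by blast
  thus ?thesis by (simp only: Let_def)
qed

end
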